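(* Let $\mathcal{H}_T=\mathbb{C}^2$, let $\mathcal{H}_E$ be a finite-dimensional Hilbert space with $\dim\mathcal{H}_E\ge 2$ containing two fixed orthonormal vectors $\ket{0}_E,\ket{1}_E$, let $\ket{\chi}\in\mathcal{H}_E$ be a unit vector, let $\mathcal{B}=\{\ket{v_0},\ket{v_1}\}$ be an arbitrary orthonormal basis of $\mathcal{H}_T$, and let $U_F,U_R$ be unitary operators on $\mathcal{H}_T\otimes\mathcal{H}_E$ (a collective attack $(U_F,U_R)$). Then there exists a restricted attack $(q_0,q_1,\eta_0,\eta_1,U)$ with respect to $\mathcal{B}$, with associated forward isometry $\mathcal{F}$, such that the following holds. For every finite-dimensional Hilbert space $\mathcal{H}_A$ (Alice's private system), every unit vector $\ket{\psi}\in\mathcal{H}_A\otimes\mathcal{H}_T$, and each of Bob's two operations $O\in\{I,\ \mathrm{CNOT}\}$ acting on $\mathcal{H}_T\otimes\mathcal{H}_B$ (where $\mathcal{H}_B=\mathbb{C}^2$ is Bob's register, initialized to $\ket{0}_B$, $I$ is the identity ("Reflect") and $\mathrm{CNOT}\ket{t}_T\ket{b}_B=\ket{t}_T\ket{b\oplus t}_B$ models "Measure and Resend"), we have \[ (I_{AB}\otimes U)\,(O\otimes I_E)\,(I_A\otimes\mathcal{F})\ket{\psi}\ket{0}_B =(I_{AB}\otimes U_R)\,(O\otimes I_E)\,(I_A\otimes U_F)\big(\ket{\psi}\otimes\ket{\chi}_E\big)\ket{0}_B , \] (with each operator acting on the indicated tensor factors). Consequently, for any (pure or mixed) input, the joint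 final state of Alice, Bob and Eve is identical under the collective attack $(U_F,U_R)$ and the restricted attack; in particular Alice and Bob cannot distinguish the two attacks, Eve's final system is the same, and the Devetak–Winter key-rate $S(A|E)-H(A|B)$ is the same under both.
   Context: Semi-quantum setting: each round Alice sends a qubit (system $T$) to Bob through a forward channel; Bob either reflects it (identity) or measures it in the computational basis $\{\ket 0,\ket 1\}$ and resends the observed state, which is modeled as a CNOT from $T$ into his private register $B$; the qubit then returns to Alice through a reverse channel. A collective attack is a pair of unitaries $(U_F,U_R)$ on $\mathcal{H}_T\otimes\mathcal{H}_E$: Eve's ancilla starts in $\ket{\chi}_E$, $U_F$ is applied in the forward channel and $U_R$ in the reverse channel. $\mathbb{D}=\{z\in\mathbb{C}:|z|\le1\}$. A restricted attack with respect to an orthonormal basis $\{\ket{v_0},\ket{v_1}\}$ of $\mathcal{H}_T$ is a tuple $(q_0,q_1,\eta_0,\eta_1,U)$ with $q_0,q_1\in[0,1]$, $\eta_0,\eta_1\in\mathbb{D}$ satisfying $q_0\eta_1\sqrt{1-q_1^2}+q_1\overline{\eta_0}\sqrt{1-q_0^2}=0$, and $U$ a unitary on $\mathcal{H}_T\otimes\mathcal{H}_E$. Its forward operation is the linear map $\mathcal{F}:\mathcal{H}_T\to\mathcal{H}_T\otimes\mathcal{H}_E$ defined by $\mathcal{F}\ket{v_0}=q_0\ket{0}_T\ket{0}_E+\sqrt{1-q_0^2}\ket{1}_T\ket{e}_E$ and $\mathcal{F}\ket{v_1}=\sqrt{1-q_1^2}\ket{0}_T\ket{f}_E+q_1\ket{1}_T\ket{0}_E$,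 where $\ket{e}=\eta_0\ket{0}_E+\sqrt{1-|\eta_0|^2}\ket{1}_E$ and $\ket{f}=\eta_1\ket{0}_E+\sqrt{1-|\eta_1|^2}\ket{1}_E$ (the constraint makes $\mathcal{F}$ an isometry); in the reverse channel Eve applies $U$. *)

theory Defs
  imports Complex_Main
begin

text \<open>The qubit spaces H_T and H_B are modelled as bool => complex,
  with False the basis vector |0> and True the basis vector |1>.
  H_E is 'e => complex for a finite type 'e (so dim H_E = CARD('e)).
  Alice's space H_A of dimension n is modelled by nat indices a < n.
  Joint states of A,T,B,E are functions on nat * bool * bool * 'e (order A,T,B,E);
  states of A,T,E are functions on nat * bool * 'e.\<close>

definition cinner :: "('a::finite \<Rightarrow> complex) \<Rightarrow> ('a \<Rightarrow> complex) \<Rightarrow> complex" where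
  "cinner u v = (\<Sum>x\<in>UNIV. cnj (u x) * v x)"

definition orthonormal2 :: "('a::finite \<Rightarrow> complex) \<Rightarrow> ('a \<Rightarrow> complex) \<Rightarrow> bool" where
  "orthonormal2 u v \<longleftrightarrow> cinner u u = 1 \<and> cinner v v = 1 \<and> cinner u v = 0"

definition unitary_op :: "('a::finite \<Rightarrow> 'a \<Rightarrow> complex) \<Rightarrow> bool" where
  "unitary_op M \<longleftrightarrow>
     (\<forall>x y. (\<Sum>z\<in>UNIV. cnj (M z x) * M z y) = (if x = y then 1 else 0)) \<and>
     (\<forall>x y. (\<Sum>z\<in>UNIV. M x z * cnj (M y z)) = (if x = y then 1 else 0))"

definition ket :: "bool \<Rightarrow> bool \<Rightarrow> complex" where
  "ket b = (\<lambda>t. if t = b then 1 else 0)"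

definition restricted_attack ::
  "real \<Rightarrow> real \<Rightarrow> complex \<Rightarrow> complex \<Rightarrow> ((bool \<times> 'e::finite) \<Rightarrow> (bool \<times> 'e) \<Rightarrow> complex) \<Rightarrow> bool" where
  "restricted_attack q0 q1 \<eta>0 \<eta>1 U \<longleftrightarrow>
     0 \<le> q0 \<and> q0 \<le> 1 \<and> 0 \<le> q1 \<and> q1 \<le> 1 \<and> cmod \<eta>0 \<le> 1 \<and> cmod \<eta>1 \<le> 1 \<and>
     complex_of_real q0 * \<eta>1 * complex_of_real (sqrt (1 - q1\<^sup>2))
       + complex_of_real q1 * cnj \<eta>0 * complex_of_real (sqrt (1 - q0\<^sup>2)) = 0 \<and>
     unitary_op U"

text \<open>The forward operation F : H_T -> H_T (x) H_E, defined on the basis v0, v1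
  and extended linearly. e0, e1 are the fixed orthonormal vectors |0>_E, |1>_E.\<close>
definition fwd_map ::
  "('e::finite \<Rightarrow> complex) \<Rightarrow> ('e \<Rightarrow> complex) \<Rightarrow> (bool \<Rightarrow> complex) \<Rightarrow> (bool \<Rightarrow> complex) \<Rightarrow>
   real \<Rightarrow> real \<Rightarrow> complex \<Rightarrow> complex \<Rightarrow> (bool \<Rightarrow> complex) \<Rightarrow> (bool \<times> 'e \<Rightarrow> complex)" where
  "fwd_map e0 e1 v0 v1 q0 q1 \<eta>0 \<eta>1 \<phi> =
    (let ek = (\<lambda>x. \<eta>0 * e0 x + complex_of_real (sqrt (1 - (cmod \<eta>0)\<^sup>2)) * e1 x);
         fk = (\<lambda>x. \<eta>1 * e0 x + complex_of_real (sqrt (1 - (cmod \<eta>1)\<^sup>2)) * e1 x);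
         Fv0 = (\<lambda>(t, x). complex_of_real q0 * ket False t * e0 x
                        + complex_of_real (sqrt (1 - q0\<^sup>2)) * ket True t * ek x);
         Fv1 = (\<lambda>(t, x). complex_of_real (sqrt (1 - q1\<^sup>2)) * ket False t * fk x
                        + complex_of_real q1 * ket True t * e0 x)
     in (\<lambda>tx. cinner v0 \<phi> * Fv0 tx + cinner v1 \<phi> * Fv1 tx))"

definition lift_A :: "((bool \<Rightarrow> complex) \<Rightarrow> (bool \<times> 'e \<Rightarrow> complex)) \<Rightarrow> (nat \<times> bool \<Rightarrow> complex)
    \<Rightarrow> (nat \<times> bool \<times> 'e \<Rightarrow> complex)" where
  "lift_A F \<psi> = (\<lambda>(a, t, x). F (\<lambda>t'. \<psi> (a, t')) (t, x))"

definition apply_ATE :: "((bool \<times> 'e::finite) \<Rightarrow> (bool \<times> 'e) \<Rightarrow> complex) \<Rightarrow> (nat \<times> bool \<times> 'e \<Rightarrow> complex)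
    \<Rightarrow> (nat \<times> bool \<times> 'e \<Rightarrow> complex)" where
  "apply_ATE V \<Phi> = (\<lambda>(a, t, x). \<Sum>(t', x')\<in>UNIV. V (t, x) (t', x') * \<Phi> (a, t', x'))"

definition tensor_E :: "(nat \<times> bool \<Rightarrow> complex) \<Rightarrow> ('e \<Rightarrow> complex) \<Rightarrow> (nat \<times> bool \<times> 'e \<Rightarrow> complex)" where
  "tensor_E \<psi> \<chi> = (\<lambda>(a, t, x). \<psi> (a, t) * \<chi> x)"

definition attach_B0 :: "(nat \<times> bool \<times> 'e \<Rightarrow> complex) \<Rightarrow> (nat \<times> bool \<times> bool \<times> 'e \<Rightarrow> complex)" where
  "attach_B0 \<Phi> = (\<lambda>(a, t, b, x). if b then 0 else \<Phi> (a, t, x))"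

datatype bob_op = Reflect | MeasureResend

definition bob_apply :: "bob_op \<Rightarrow> (nat \<times> bool \<times> bool \<times> 'e \<Rightarrow> complex) \<Rightarrow> (nat \<times> bool \<times> bool \<times> 'e \<Rightarrow> complex)" where
  "bob_apply op s = (case op of
       Reflect \<Rightarrow> s
     | MeasureResend \<Rightarrow> (\<lambda>(a, t, b, x). s (a, t, b \<noteq> t, x)))"

definition eve_apply :: "((bool \<times> 'e::finite) \<Rightarrow> (bool \<times> 'e) \<Rightarrow> complex) \<Rightarrow> (nat \<times> bool \<times> bool \<times> 'e \<Rightarrow> complex)
    \<Rightarrow> (nat \<times> bool \<times> bool \<times> 'e \<Rightarrow> complex)" where
  "eve_apply V s = (\<lambda>(a, t, b, x). \<Sum>(t', x')\<in>UNIV. V (t, x) (t', x') * s (a, t', b, x'))"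

end

theory Submission imports Defs "HOL-Analysis.L2_Norm"
begin

lemma cinner_add_left[simp]: "cinner (\<lambda>x. u x + v x) w = cinner u w + cinner v w"
  by (simp add: cinner_def distrib_right sum.distrib)
lemma cinner_add_right[simp]: "cinner w (\<lambda>x. u x + v x) = cinner w u + cinner w v"
  by (simp add: cinner_def distrib_left sum.distrib)
lemma cinner_diff_left[simp]: "cinner (\<lambda>x. u x - v x) w = cinner u w - cinner v w"
  by (simp add: cinner_def left_diff_distrib sum_subtractf)
lemma cinner_diff_right[simp]: "cinner w (\<lambda>x. u x - v x) = cinner w u - cinner w v"
  by (simp add: cinner_def right_diff_distrib sum_subtractf)
lemma cinner_scale_left[simp]: "cinner (\<lambda>x. c * u x) w = cnj c * cinner u w"
  by (simp add: cinner_def sum_distrib_left mult_ac)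
lemma cinner_scale_right[simp]: "cinner w (\<lambda>x. c * u x) = c * cinner w u"
  by (simp add: cinner_def sum_distrib_left mult_ac)
lemma cinner_zero_left[simp]: "cinner (\<lambda>x. 0) w = 0"
  by (simp add: cinner_def)
lemma cinner_zero_right[simp]: "cinner w (\<lambda>x. 0) = 0"
  by (simp add: cinner_def)
lemma cinner_cnj: "cnj (cinner u v) = cinner v u"
  by (simp add: cinner_def mult.commute)

lemma cinner_self: "cinner u u = complex_of_real (\<Sum>x\<in>UNIV. (cmod (u x))\<^sup>2)"
proof -
  have "cinner u u = (\<Sum>x\<in>UNIV. complex_of_real ((cmod (u x))\<^sup>2))"
    unfolding cinner_def by (intro sum.cong refl) (metis complex_norm_square mult.commute)
  thus ?thesis by simp
qed

lemma cinner_self_Re: "cinner u u = complex_of_real (Re (cinner u u))"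
  by (simp add: cinner_self)
lemma cinner_self_nonneg: "0 \<le> Re (cinner u u)"
  by (simp add: cinner_self sum_nonneg)
lemma cinner_self_cnj[simp]: "cnj (cinner u u) = cinner u u"
  by (metis cinner_cnj)

lemma cinner_self_eq0: "cinner u u = 0 \<Longrightarrow> u = (\<lambda>x. 0)"
proof -
  assume a: "cinner u u = 0"
  have "(\<Sum>x\<in>UNIV. (cmod (u x))\<^sup>2) = 0" using a cinner_self[of u] by (metis of_real_eq_0_iff)
  hence "\<forall>x\<in>UNIV. (cmod (u x))\<^sup>2 = 0" by (subst (asm) sum_nonneg_eq_0_iff) auto
  thus ?thesis by auto
qed

lemma cinner_zero_of_self: "cinner u u = 0 \<Longrightarrow> cinner u v = 0"
  by (drule cinner_self_eq0) simp

lemma CS: "cmod (cinner u v) \<le> sqrt (Re (cinner u u)) * sqrt (Re (cinner v v))"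
proof -
  have "cmod (cinner u v) \<le> (\<Sum>x\<in>UNIV. \<bar>cmod (u x)\<bar> * \<bar>cmod (v x)\<bar>)"
    unfolding cinner_def by (rule order_trans[OF norm_sum]) (simp add: norm_mult)
  also have "\<dots> \<le> L2_set (\<lambda>x. cmod (u x)) UNIV * L2_set (\<lambda>x. cmod (v x)) UNIV"
    by (rule L2_set_mult_ineq)
  also have "\<dots> = sqrt (Re (cinner u u)) * sqrt (Re (cinner v v))"
    by (simp add: L2_set_def cinner_self)
  finally show ?thesis .
qed

definition mv :: "('a::finite \<Rightarrow> 'a \<Rightarrow> complex) \<Rightarrow> ('a \<Rightarrow> complex) \<Rightarrow> 'a \<Rightarrow> complex" where
  "mv M u = (\<lambda>i. \<Sum>j\<in>UNIV. M i j * u j)"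
definition mm :: "('a::finite \<Rightarrow> 'a \<Rightarrow> complex) \<Rightarrow> ('a \<Rightarrow> 'a \<Rightarrow> complex) \<Rightarrow> 'a \<Rightarrow> 'a \<Rightarrow> complex" where
  "mm A B = (\<lambda>i k. \<Sum>j\<in>UNIV. A i j * B j k)"
definition adj :: "('a \<Rightarrow> 'a \<Rightarrow> complex) \<Rightarrow> 'a \<Rightarrow> 'a \<Rightarrow> complex" where
  "adj M = (\<lambda>i j. cnj (M j i))"
definition idm :: "'a \<Rightarrow> 'a \<Rightarrow> complex" where
  "idm = (\<lambda>i j. if i = j then 1 else 0)"

lemma unitary_iff: "unitary_op M \<longleftrightarrow> mm (adj M) M = idm \<and> mm M (adj M) = idm"
  unfolding unitary_op_def mm_def adj_def idm_def fun_eq_iff by simp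

lemma ifmult1[simp]: "(if P then 1 else 0) * (x::complex) = (if P then x else 0)" by simp
lemma ifmult2[simp]: "(x::complex) * (if P then 1 else 0) = (if P then x else 0)" by simp

lemma if0_mult_l[simp]: "c * (if P then x else 0) = (if P then c * x else (0::complex))" by simp
lemma if0_mult_r[simp]: "(if P then x else 0) * c = (if P then x * c else (0::complex))" by simp

lemma mm_assoc: "mm (mm A B) C = mm A (mm B C)"
  unfolding mm_def apply (intro ext)
  by (simp add: sum_distrib_left sum_distrib_right mult_ac) (rule sum.swap)

lemma adj_mm: "adj (mm A B) = mm (adj B) (adj A)"
  unfolding mm_def adj_def fun_eq_iff by (simp add: mult.commute)

lemma adj_adj[simp]: "adj (adj A) = A"
  unfolding adj_def by simp

lemma mm_idm_left[simp]: "mm idm A = A"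
  unfolding mm_def idm_def fun_eq_iff by simp
lemma mm_idm_right[simp]: "mm A idm = A"
  unfolding mm_def idm_def fun_eq_iff by simp

lemma unitary_mm: "unitary_op A \<Longrightarrow> unitary_op B \<Longrightarrow> unitary_op (mm A B)"
  unfolding unitary_iff adj_mm
  by (metis mm_assoc mm_idm_left)

lemma mv_mm: "mv (mm A B) u = mv A (mv B u)"
  unfolding mv_def mm_def apply (intro ext)
  by (simp add: sum_distrib_left sum_distrib_right mult_ac) (rule sum.swap)

lemma mv_idm[simp]: "mv idm u = u"
  unfolding mv_def idm_def fun_eq_iff by simp

lemma cinner_mv_adj: "cinner (mv M u) w = cinner u (mv (adj M) w)"
  unfolding cinner_def mv_def adj_def
  by (simp add: sum_distrib_left sum_distrib_right mult_ac) (rule sum.swap)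

lemma unitary_inner: "unitary_op M \<Longrightarrow> cinner (mv M u) (mv M v) = cinner u v"
  by (simp add: cinner_mv_adj unitary_iff flip: mv_mm)

lemma mv_add[simp]: "mv M (\<lambda>x. u x + v x) = (\<lambda>i. mv M u i + mv M v i)"
  unfolding mv_def by (simp add: distrib_left sum.distrib)
lemma mv_scale[simp]: "mv M (\<lambda>x. c * u x) = (\<lambda>i. c * mv M u i)"
  unfolding mv_def by (simp add: sum_distrib_left mult_ac)
lemma mv_zero[simp]: "mv M (\<lambda>x. 0) = (\<lambda>i. 0)"
  unfolding mv_def by simp

definition rk1 :: "complex \<Rightarrow> ('a::finite \<Rightarrow> complex) \<Rightarrow> 'a \<Rightarrow> 'a \<Rightarrow> complex" where
  "rk1 a w = (\<lambda>i j. idm i j + a * w i * cnj (w j))"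

lemma adj_rk1: "adj (rk1 a w) = rk1 (cnj a) w"
  unfolding adj_def rk1_def idm_def fun_eq_iff by simp

lemma mm_rk1: "mm (rk1 a w) (rk1 b w) = rk1 (a + b + a * b * cinner w w) w"
proof -
  have "\<And>i k. (\<Sum>j\<in>UNIV. (idm i j + a * w i * cnj (w j)) * (idm j k + b * w j * cnj (w k)))
     = idm i k + (a + b + a * b * cinner w w) * w i * cnj (w k)"
  proof -
    fix i k
    have "(\<Sum>j\<in>UNIV. (idm i j + a * w i * cnj (w j)) * (idm j k + b * w j * cnj (w k)))
      = (\<Sum>j\<in>UNIV. idm i j * idm j k) + (\<Sum>j\<in>UNIV. idm i j * (b * w j * cnj (w k)))
        + (\<Sum>j\<in>UNIV. a * w i * cnj (w j) * idm j k)
        + (\<Sum>j\<in>UNIV. (a * b * w i * cnj (w k)) * (cnj (w j) * w j))"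
      by (simp add: algebra_simps sum.distrib)
    also have "\<dots> = idm i k + b * w i * cnj (w k) + a * w i * cnj (w k) + (a * b * w i * cnj (w k)) * cinner w w"
      unfolding idm_def cinner_def
      by (simp add: sum_distrib_left mult_ac)
    finally show "?thesis i k" by (simp add: algebra_simps)
  qed
  thus ?thesis unfolding mm_def rk1_def fun_eq_iff by simp
qed

lemma rk1_zero: "rk1 0 w = idm"
  unfolding rk1_def by simp

lemma mv_rk1: "mv (rk1 a w) u = (\<lambda>i. u i + a * cinner w u * w i)"
  unfolding mv_def rk1_def idm_def cinner_def
  by (intro ext) (simp add: ring_distribs sum.distrib sum_distrib_left mult_ac)


lemma unitary_rk1:
  assumes "cmod \<alpha> = 1"
  shows "unitary_op (rk1 ((\<alpha> - 1) / cinner w w) w)"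
proof -
  let ?N = "cinner w w"
  let ?a = "(\<alpha> - 1) / ?N"
  have ac: "\<alpha> * cnj \<alpha> = 1" using assms complex_norm_square[of \<alpha>] by simp
  have ca: "cnj ?a = (cnj \<alpha> - 1) / ?N" by simp
  have key: "cnj ?a + ?a + cnj ?a * ?a * ?N = 0"
  proof (cases "?N = 0")
    case True thus ?thesis by simp
  next
    case False
    have "cnj ?a + ?a + cnj ?a * ?a * ?N = ((cnj \<alpha> - 1) + (\<alpha> - 1) + (cnj \<alpha> - 1) * (\<alpha> - 1)) / ?N"
      using False unfolding ca by (simp add: field_simps)
    also have "(cnj \<alpha> - 1) + (\<alpha> - 1) + (cnj \<alpha> - 1) * (\<alpha> - 1) = \<alpha> * cnj \<alpha> - 1"
      by (simp add: algebra_simps)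
    finally show ?thesis using ac by simp
  qed
  show ?thesis unfolding unitary_iff adj_rk1 mm_rk1
    using key by (simp add: rk1_zero algebra_simps)
qed

lemma mv_rk1_self: "mv (rk1 ((\<alpha> - 1) / cinner w w) w) w = (\<lambda>i. \<alpha> * w i)"
proof (cases "cinner w w = 0")
  case True
  hence "w = (\<lambda>x. 0)" by (rule cinner_self_eq0)
  thus ?thesis by (simp add: mv_rk1)
next
  case False
  thus ?thesis by (simp add: mv_rk1 field_simps)
qed

lemma single_map:
  fixes x y :: "'a::finite \<Rightarrow> complex"
  assumes "cinner x x = cinner y y"
  shows "\<exists>W. unitary_op W \<and> mv W x = y \<and> (\<forall>u. cinner x u = 0 \<longrightarrow> cinner y u = 0 \<longrightarrow> mv W u = u)"
proof -
  define \<beta> where "\<beta> = (if cinner x y = 0 then 1 else cinner x y / complex_of_real (cmod (cinner x y)))"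
  have b1: "cmod \<beta> = 1" unfolding \<beta>_def by (simp add: norm_divide)
  have breal: "cnj \<beta> * cinner x y = complex_of_real (cmod (cinner x y))"
  proof (cases "cinner x y = 0")
    case True thus ?thesis unfolding \<beta>_def by simp
  next
    case False
    have "cnj (cinner x y) * cinner x y = complex_of_real ((cmod (cinner x y))\<^sup>2)"
      by (metis complex_norm_square mult.commute)
    thus ?thesis using False unfolding \<beta>_def by (simp add: field_simps power2_eq_square)
  qed
  define W1 where "W1 = rk1 ((\<beta> - 1) / cinner x x) x"
  define d where "d = (\<lambda>i. \<beta> * x i - y i)"
  define W2 where "W2 = rk1 ((-1 - 1) / cinner d d) d"
  have u1: "unitary_op W1" unfolding W1_def by (rule unitary_rk1[OF b1])
  have u2: "unitary_op W2" unfolding W2_def by (rule unitary_rk1) simp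
  have m1: "mv W1 x = (\<lambda>i. \<beta> * x i)" unfolding W1_def by (rule mv_rk1_self)
  let ?r = "complex_of_real (cmod (cinner x y))"
  have bb: "cnj \<beta> * \<beta> = 1" using b1 complex_norm_square[of \<beta>] by (simp add: mult.commute)
  have dx: "cinner d (\<lambda>i. \<beta> * x i) = cinner y y - ?r"
    unfolding d_def using assms breal bb
    by (simp add: cinner_cnj[of y x, symmetric] mult.assoc[symmetric])
       (metis breal complex_cnj_cnj complex_cnj_mult complex_cnj_complex_of_real)
  have dd: "cinner d d = 2 * (cinner y y - ?r)"
    unfolding d_def using assms breal bb
    apply (simp add: cinner_cnj[of y x, symmetric] mult.assoc[symmetric])
    by (metis (no_types, lifting) breal complex_cnj_cnj complex_cnj_mult complex_cnj_complex_of_real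
        mult_2 diff_add_eq diff_diff_eq2 add_diff_eq)
  have m2: "mv W2 (\<lambda>i. \<beta> * x i) = y"
  proof (cases "cinner d d = 0")
    case True
    hence "d = (\<lambda>i. 0)" by (rule cinner_self_eq0)
    hence "(\<lambda>i. \<beta> * x i) = y" unfolding d_def fun_eq_iff by simp
    thus ?thesis using True unfolding W2_def by (simp add: mv_rk1)
  next
    case False
    have "mv W2 (\<lambda>i. \<beta> * x i) = (\<lambda>i. \<beta> * x i + ((-1 - 1) / cinner d d) * cinner d (\<lambda>i. \<beta> * x i) * d i)"
      unfolding W2_def by (rule mv_rk1)
    also have "((-1 - 1) / cinner d d) * cinner d (\<lambda>i. \<beta> * x i) = -1"
      using False unfolding dx dd by (simp add: field_simps)
    finally show ?thesis unfolding d_def by simp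
  qed
  have fx: "mv (mm W2 W1) u = u" if "cinner x u = 0" "cinner y u = 0" for u
  proof -
    have "mv W1 u = u" unfolding W1_def mv_rk1 using that by simp
    moreover have "cinner d u = 0" unfolding d_def using that by simp
    hence "mv W2 u = u" unfolding W2_def mv_rk1 by simp
    ultimately show ?thesis by (simp add: mv_mm)
  qed
  show ?thesis
    by (rule exI[of _ "mm W2 W1"]) (use u1 u2 m1 m2 fx in \<open>simp add: unitary_mm mv_mm\<close>)
qed


lemma pair_map:
  fixes x1 x2 y1 y2 :: "'a::finite \<Rightarrow> complex"
  assumes g1: "cinner x1 x1 = cinner y1 y1" and g2: "cinner x2 x2 = cinner y2 y2"
    and g12: "cinner x1 x2 = cinner y1 y2"
  shows "\<exists>W. unitary_op W \<and> mv W x1 = y1 \<and> mv W x2 = y2"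
proof -
  obtain W1 where u1: "unitary_op W1" and m1: "mv W1 x1 = y1"
    using single_map[OF g1] by blast
  define z where "z = mv W1 x2"
  have yz: "cinner y1 z = cinner y1 y2"
    unfolding z_def using unitary_inner[OF u1, of x1 x2] m1 g12 by simp
  have zz: "cinner z z = cinner y2 y2"
    unfolding z_def using unitary_inner[OF u1, of x2 x2] g2 by simp
  define p where "p = cinner y1 y2 / cinner y1 y1"
  define zp where "zp = (\<lambda>i. z i - p * y1 i)"
  define yp where "yp = (\<lambda>i. y2 i - p * y1 i)"
  have zy: "cinner z y1 = cinner y2 y1"
    using yz by (metis cinner_cnj)
  have gp: "cinner zp zp = cinner yp yp"
    unfolding zp_def yp_def using yz zy zz by simp
  have o1: "cinner zp y1 = 0" and o2: "cinner yp y1 = 0"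
  proof -
    have "cinner zp y1 = 0 \<and> cinner yp y1 = 0"
    proof (cases "cinner y1 y1 = 0")
      case True
      hence "y1 = (\<lambda>i. 0)" by (rule cinner_self_eq0)
      thus ?thesis by simp
    next
      case False
      have cp: "cnj p = cinner y2 y1 / cinner y1 y1"
        unfolding p_def by (simp add: cinner_cnj)
      show ?thesis unfolding zp_def yp_def using False zy
        by (simp add: cp)
    qed
    thus "cinner zp y1 = 0" "cinner yp y1 = 0" by auto
  qed
  obtain W2 where u2: "unitary_op W2" and m2: "mv W2 zp = yp"
    and f2: "\<And>u. cinner zp u = 0 \<Longrightarrow> cinner yp u = 0 \<Longrightarrow> mv W2 u = u"
    using single_map[OF gp] by blast
  have fy: "mv W2 y1 = y1" using f2 o1 o2 by blast
  have "z = (\<lambda>i. zp i + p * y1 i)" unfolding zp_def by simp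
  hence "mv W2 z = (\<lambda>i. yp i + p * y1 i)" using m2 fy by simp
  hence "mv W2 z = y2" unfolding yp_def by simp
  thus ?thesis
    by (intro exI[of _ "mm W2 W1"]) (simp add: unitary_mm u1 u2 mv_mm m1 fy flip: z_def)
qed


lemma cinner_bool: "cinner (u::bool \<Rightarrow> complex) v = cnj (u False) * v False + cnj (u True) * v True"
  unfolding cinner_def UNIV_bool by simp

lemma complete2:
  fixes v0 v1 \<phi> :: "bool \<Rightarrow> complex"
  assumes "orthonormal2 v0 v1"
  shows "\<phi> = (\<lambda>t. cinner v0 \<phi> * v0 t + cinner v1 \<phi> * v1 t)"
proof -
  have n0: "cinner v0 v0 = 1" and n1: "cinner v1 v1 = 1" and o: "cinner v0 v1 = 0"
    using assms unfolding orthonormal2_def by auto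
  have o': "cinner v1 v0 = 0" using o cinner_cnj[of v0 v1] by simp
  define r where "r = (\<lambda>t. \<phi> t - (cinner v0 \<phi> * v0 t + cinner v1 \<phi> * v1 t))"
  have r0: "cinner v0 r = 0" unfolding r_def using n0 o by simp
  have r1: "cinner v1 r = 0" unfolding r_def using n1 o' by simp
  define a where "a = v0 False" define b where "b = v0 True"
  define c where "c = v1 False" define d where "d = v1 True"
  have e1: "cnj a * r False + cnj b * r True = 0" using r0 unfolding cinner_bool a_def b_def .
  have e2: "cnj c * r False + cnj d * r True = 0" using r1 unfolding cinner_bool c_def d_def .
  have N0: "cnj a * a + cnj b * b = 1" using n0 unfolding cinner_bool a_def b_def .
  have N1: "cnj c * c + cnj d * d = 1" using n1 unfolding cinner_bool c_def d_def .
  have O: "cnj a * c + cnj b * d = 0" using o unfolding cinner_bool a_def b_def c_def d_def .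
  have O': "a * cnj c + b * cnj d = 0" using arg_cong[OF O, of cnj] by (simp add: mult.commute)
  have lag: "(a * d - b * c) * (cnj a * cnj d - cnj b * cnj c)
      = (cnj a * a + cnj b * b) * (cnj c * c + cnj d * d) - (cnj a * c + cnj b * d) * (a * cnj c + b * cnj d)"
    by algebra
  hence D: "cnj a * cnj d - cnj b * cnj c \<noteq> 0" using N0 N1 O by auto
  have "r False * (cnj a * cnj d - cnj b * cnj c) = cnj d * (cnj a * r False + cnj b * r True) - cnj b * (cnj c * r False + cnj d * r True)"
    by algebra
  hence rf: "r False = 0" using e1 e2 D by simp
  have "r True * (cnj a * cnj d - cnj b * cnj c) = cnj a * (cnj c * r False + cnj d * r True) - cnj c * (cnj a * r False + cnj b * r True)"
    by algebra
  hence rt: "r True = 0" using e1 e2 D by simp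
  have "\<And>t. r t = 0" using rf rt by (metis (full_types))
  thus ?thesis unfolding r_def fun_eq_iff by (simp add: algebra_simps)
qed

lemma sum_bp: "(\<Sum>p\<in>(UNIV::(bool \<times> 'e::finite) set). f p) = (\<Sum>x\<in>UNIV. f (False, x)) + (\<Sum>x\<in>UNIV. f (True, x))"
proof -
  have "(\<Sum>p\<in>(UNIV::(bool \<times> 'e) set). f p) = (\<Sum>p\<in>(UNIV::bool set) \<times> (UNIV::'e set). f p)"
    by (simp flip: UNIV_Times_UNIV)
  also have "\<dots> = (\<Sum>t\<in>UNIV. \<Sum>x\<in>UNIV. f (t, x))" by (simp add: sum.cartesian_product)
  also have "\<dots> = (\<Sum>x\<in>UNIV. f (False, x)) + (\<Sum>x\<in>UNIV. f (True, x))" unfolding UNIV_bool by simp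
  finally show ?thesis .
qed

lemma cinner_split: "cinner (w :: bool \<times> 'e::finite \<Rightarrow> complex) w' =
   cinner (\<lambda>x. w (False, x)) (\<lambda>x. w' (False, x)) + cinner (\<lambda>x. w (True, x)) (\<lambda>x. w' (True, x))"
  unfolding cinner_def by (rule sum_bp)

definition tens :: "(bool \<Rightarrow> complex) \<Rightarrow> ('e \<Rightarrow> complex) \<Rightarrow> bool \<times> 'e \<Rightarrow> complex" where
  "tens v \<chi> = (\<lambda>p. v (fst p) * \<chi> (snd p))"

lemma cinner_tens: "cinner (tens u (\<chi>::'e::finite \<Rightarrow> complex)) (tens v \<chi>) = cinner u v * cinner \<chi> \<chi>"
  unfolding cinner_split tens_def cinner_bool by (simp add: mult.commute[of "\<chi> _"]) (simp add: algebra_simps)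

definition bd :: "(bool \<Rightarrow> 'e \<Rightarrow> 'e \<Rightarrow> complex) \<Rightarrow> bool \<times> 'e \<Rightarrow> bool \<times> 'e \<Rightarrow> complex" where
  "bd W = (\<lambda>p q. if fst p = fst q then W (fst p) (snd p) (snd q) else 0)"

lemma mm_bd: "mm (bd A) (bd B) = bd (\<lambda>t. mm (A t) (B t :: 'e::finite \<Rightarrow> 'e \<Rightarrow> complex))"
proof (intro ext)
  fix p q :: "bool \<times> 'e"
  show "mm (bd A) (bd B) p q = bd (\<lambda>t. mm (A t) (B t)) p q"
  proof -
    obtain t x t' x' where pq: "p = (t, x)" "q = (t', x')" by fastforce
    show ?thesis unfolding pq by (cases t; cases t') (simp_all add: mm_def bd_def sum_bp)
  qed
qed

lemma adj_bd: "adj (bd A) = bd (\<lambda>t. adj (A t))"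
  unfolding adj_def bd_def fun_eq_iff by auto

lemma idm_bd: "bd (\<lambda>t. idm) = idm"
  unfolding idm_def bd_def fun_eq_iff by (auto simp: prod_eq_iff)

lemma unitary_bd: "(\<And>t. unitary_op (W t :: 'e::finite \<Rightarrow> 'e \<Rightarrow> complex)) \<Longrightarrow> unitary_op (bd W)"
  unfolding unitary_iff mm_bd adj_bd by (simp add: idm_bd)

lemma mv_bd: "mv (bd W) f (t, x) = mv (W t :: 'e::finite \<Rightarrow> 'e \<Rightarrow> complex) (\<lambda>x'. f (t, x')) x"
  unfolding mv_def bd_def sum_bp by (cases t) auto


lemma eve_mv: "eve_apply V s = (\<lambda>(a, t, b, x). mv V (\<lambda>p. s (a, fst p, b, snd p)) (t, x))"
  unfolding eve_apply_def mv_def by (intro ext) (auto simp: split_beta)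

lemma eve_mm: "eve_apply (mm A B) s = eve_apply A (eve_apply B s)"
  unfolding eve_mv by (auto simp: mv_mm split_beta)

lemma eve_bob: "eve_apply (bd W) (bob_apply bop s) = bob_apply bop (eve_apply (bd W) s)"
proof (cases bop)
  case Reflect thus ?thesis by (simp add: bob_apply_def)
next
  case MeasureResend
  show ?thesis
  proof (intro ext)
    fix z :: "nat \<times> bool \<times> bool \<times> 'a"
    obtain a t b x where z: "z = (a, t, b, x)" by (cases z) auto
    show "eve_apply (bd W) (bob_apply bop s) z = bob_apply bop (eve_apply (bd W) s) z"
      unfolding z MeasureResend by (cases t) (simp_all add: eve_apply_def bob_apply_def bd_def sum_bp)
  qed
qed

lemma eve_attach: "eve_apply V (attach_B0 \<Phi>) = attach_B0 (apply_ATE V \<Phi>)"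
  unfolding eve_apply_def attach_B0_def apply_ATE_def by (intro ext) (auto simp: split_beta)

lemma ate_mv: "apply_ATE V \<Phi> = (\<lambda>(a, t, x). mv V (\<lambda>p. \<Phi> (a, fst p, snd p)) (t, x))"
  unfolding apply_ATE_def mv_def by (intro ext) (auto simp: split_beta)

lemma core:
  fixes F :: "(bool \<Rightarrow> complex) \<Rightarrow> bool \<times> 'e::finite \<Rightarrow> complex"
  assumes hF: "\<And>\<phi>. F \<phi> = (\<lambda>p. cinner v0 \<phi> * F0 p + cinner v1 \<phi> * F1 p)"
    and h0: "mv V F0 = mv UF (tens v0 \<chi>)" and h1: "mv V F1 = mv UF (tens v1 \<chi>)"
    and on: "orthonormal2 v0 v1"
  shows "apply_ATE V (lift_A F \<psi>) = apply_ATE UF (tensor_E \<psi> \<chi>)"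
proof -
  have "mv V (\<lambda>p. lift_A F \<psi> (a, fst p, snd p)) = mv UF (\<lambda>p. tensor_E \<psi> \<chi> (a, fst p, snd p))" for a
  proof -
    define \<phi> where "\<phi> = (\<lambda>t'. \<psi> (a, t'))"
    have l: "(\<lambda>p. lift_A F \<psi> (a, fst p, snd p)) = F \<phi>"
      unfolding lift_A_def \<phi>_def by (simp add: split_beta)
    have c: "\<phi> = (\<lambda>t. cinner v0 \<phi> * v0 t + cinner v1 \<phi> * v1 t)" by (rule complete2[OF on])
    have "(\<lambda>p. tensor_E \<psi> \<chi> (a, fst p, snd p)) = (\<lambda>p. \<phi> (fst p) * \<chi> (snd p))"
      unfolding tensor_E_def \<phi>_def by (simp add: split_beta)
    also have "\<dots> = (\<lambda>p. cinner v0 \<phi> * tens v0 \<chi> p + cinner v1 \<phi> * tens v1 \<chi> p)"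
      by (subst c) (simp add: tens_def algebra_simps)
    finally have t: "(\<lambda>p. tensor_E \<psi> \<chi> (a, fst p, snd p)) = (\<lambda>p. cinner v0 \<phi> * tens v0 \<chi> p + cinner v1 \<phi> * tens v1 \<chi> p)" .
    show ?thesis unfolding l t hF by (simp add: h0 h1)
  qed
  thus ?thesis unfolding ate_mv by simp
qed


theorem theorem1:
  fixes e0 e1 \<chi> :: "'e::finite \<Rightarrow> complex"
    and v0 v1 :: "bool \<Rightarrow> complex"
    and UF UR :: "(bool \<times> 'e) \<Rightarrow> (bool \<times> 'e) \<Rightarrow> complex"
  assumes "card (UNIV :: 'e set) \<ge> 2"
    and "orthonormal2 e0 e1"
    and "cinner \<chi> \<chi> = 1"
    and "orthonormal2 v0 v1"
    and "unitary_op UF"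
    and "unitary_op UR"
  shows "\<exists>q0 q1 \<eta>0 \<eta>1 U. restricted_attack q0 q1 \<eta>0 \<eta>1 U \<and>
    (\<forall>(n::nat) (\<psi>::nat \<times> bool \<Rightarrow> complex) bop.
       (\<forall>a t. n \<le> a \<longrightarrow> \<psi> (a, t) = 0) \<longrightarrow>
       (\<Sum>a<n. \<Sum>t\<in>UNIV. (cmod (\<psi> (a, t)))\<^sup>2) = 1 \<longrightarrow>
       eve_apply U (bob_apply bop (attach_B0 (lift_A (fwd_map e0 e1 v0 v1 q0 q1 \<eta>0 \<eta>1) \<psi>)))
       = eve_apply UR (bob_apply bop (attach_B0 (apply_ATE UF (tensor_E \<psi> \<chi>)))))"
proof -
  note onE = assms(2) and chi = assms(3) and onV = assms(4) and uF = assms(5) and uR = assms(6)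
  have ce0: "cinner e0 e0 = 1" and ce1: "cinner e1 e1 = 1" and ce01: "cinner e0 e1 = 0"
    using onE unfolding orthonormal2_def by auto
  have ce10: "cinner e1 e0 = 0" using ce01 cinner_cnj[of e0 e1] by simp
  have cv0: "cinner v0 v0 = 1" and cv1: "cinner v1 v1 = 1" and cv01: "cinner v0 v1 = 0"
    using onV unfolding orthonormal2_def by auto
  define w0 where "w0 = mv UF (tens v0 \<chi>)"
  define w1 where "w1 = mv UF (tens v1 \<chi>)"
  have nw0: "cinner w0 w0 = 1" unfolding w0_def unitary_inner[OF uF] cinner_tens using cv0 chi by simp
  have nw1: "cinner w1 w1 = 1" unfolding w1_def unitary_inner[OF uF] cinner_tens using cv1 chi by simp
  have nw01: "cinner w0 w1 = 0" unfolding w0_def w1_def unitary_inner[OF uF] cinner_tens using cv01 by simp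
  define a0 where "a0 = (\<lambda>x. w0 (False, x))"
  define a1 where "a1 = (\<lambda>x. w0 (True, x))"
  define b0 where "b0 = (\<lambda>x. w1 (False, x))"
  define b1 where "b1 = (\<lambda>x. w1 (True, x))"
  have haa: "cinner a0 a0 + cinner a1 a1 = 1" using nw0 unfolding cinner_split[of w0] a0_def a1_def .
  have hbb: "cinner b0 b0 + cinner b1 b1 = 1" using nw1 unfolding cinner_split[of w1] b0_def b1_def .
  have hab: "cinner a0 b0 + cinner a1 b1 = 0" using nw01 unfolding cinner_split[of w0] a0_def a1_def b0_def b1_def .
  have Raa: "Re (cinner a0 a0) + Re (cinner a1 a1) = 1" using arg_cong[OF haa, of Re] by simp
  have Rbb: "Re (cinner b0 b0) + Re (cinner b1 b1) = 1" using arg_cong[OF hbb, of Re] by simp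
  note nn = cinner_self_nonneg
  define q0 where "q0 = sqrt (Re (cinner a0 a0))"
  define q1 where "q1 = sqrt (Re (cinner b1 b1))"
  define s0 where "s0 = sqrt (Re (cinner a1 a1))"
  define s1 where "s1 = sqrt (Re (cinner b0 b0))"
  have q0sq: "q0\<^sup>2 = Re (cinner a0 a0)" unfolding q0_def using nn by simp
  have q1sq: "q1\<^sup>2 = Re (cinner b1 b1)" unfolding q1_def using nn by simp
  have s0sq: "s0\<^sup>2 = Re (cinner a1 a1)" unfolding s0_def using nn by simp
  have s1sq: "s1\<^sup>2 = Re (cinner b0 b0)" unfolding s1_def using nn by simp
  have s0eq: "sqrt (1 - q0\<^sup>2) = s0" unfolding q0sq s0_def using Raa by (simp add: algebra_simps)
  have s1eq: "sqrt (1 - q1\<^sup>2) = s1" unfolding q1sq s1_def using Rbb by (simp add: algebra_simps)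
  have q0r: "0 \<le> q0 \<and> q0 \<le> 1" unfolding q0_def using Raa nn[of a1] nn[of a0] by simp
  have q1r: "0 \<le> q1 \<and> q1 \<le> 1" unfolding q1_def using Rbb nn[of b0] nn[of b1] by simp
  have s0p: "0 \<le> s0" and s1p: "0 \<le> s1" unfolding s0_def s1_def using nn by simp_all
  define \<eta>1 where "\<eta>1 = cinner a0 b0 / complex_of_real (q0 * s1)"
  define \<eta>0 where "\<eta>0 = cnj (cinner a1 b1 / complex_of_real (s0 * q1))"
  have CS1: "cmod (cinner a0 b0) \<le> q0 * s1" unfolding q0_def s1_def by (rule CS)
  have CS0: "cmod (cinner a1 b1) \<le> s0 * q1" unfolding s0_def q1_def by (rule CS)
  have et1: "cmod \<eta>1 \<le> 1"
  proof (cases "q0 * s1 = 0")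
    case True thus ?thesis unfolding \<eta>1_def by auto
  next
    case False
    hence "0 < q0 * s1" using q0r s1p by simp
    moreover have "cmod (complex_of_real q0 * complex_of_real s1) = q0 * s1"
      using q0r s1p by (simp add: norm_mult)
    ultimately show ?thesis unfolding \<eta>1_def using CS1 by (simp add: norm_divide)
  qed
  have et0: "cmod \<eta>0 \<le> 1"
  proof (cases "s0 * q1 = 0")
    case True thus ?thesis unfolding \<eta>0_def by auto
  next
    case False
    hence "0 < s0 * q1" using q1r s0p by simp
    moreover have "cmod (complex_of_real s0 * complex_of_real q1) = s0 * q1"
      using q1r s0p by (simp add: norm_mult)
    ultimately show ?thesis unfolding \<eta>0_def using CS0 by (simp add: norm_divide)
  qed
  have key1: "complex_of_real q0 * \<eta>1 * complex_of_real s1 = cinner a0 b0"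
  proof (cases "q0 * s1 = 0")
    case True
    hence "cinner a0 b0 = 0" using CS1 by auto
    thus ?thesis unfolding \<eta>1_def by simp
  next
    case False thus ?thesis unfolding \<eta>1_def by (simp add: field_simps)
  qed
  have key0: "complex_of_real q1 * cnj \<eta>0 * complex_of_real s0 = cinner a1 b1"
  proof (cases "s0 * q1 = 0")
    case True
    hence "cinner a1 b1 = 0" using CS0 by auto
    thus ?thesis unfolding \<eta>0_def by simp
  next
    case False thus ?thesis unfolding \<eta>0_def by (simp add: field_simps)
  qed
  define r0 where "r0 = sqrt (1 - (cmod \<eta>0)\<^sup>2)"
  define r1 where "r1 = sqrt (1 - (cmod \<eta>1)\<^sup>2)"
  define ek where "ek = (\<lambda>x. \<eta>0 * e0 x + complex_of_real r0 * e1 x)"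
  define fk where "fk = (\<lambda>x. \<eta>1 * e0 x + complex_of_real r1 * e1 x)"
  have r0sq: "r0\<^sup>2 = 1 - (cmod \<eta>0)\<^sup>2" unfolding r0_def using et0 by (simp add: power_le_one)
  have r1sq: "r1\<^sup>2 = 1 - (cmod \<eta>1)\<^sup>2" unfolding r1_def using et1 by (simp add: power_le_one)
  have nek: "cinner ek ek = 1"
  proof -
    have "cinner ek ek = cnj \<eta>0 * \<eta>0 + complex_of_real (r0\<^sup>2)"
      unfolding ek_def using ce0 ce1 ce01 ce10 by (simp add: power2_eq_square)
    also have "\<dots> = complex_of_real ((cmod \<eta>0)\<^sup>2 + r0\<^sup>2)"
      by (metis complex_norm_square mult.commute of_real_add)
    finally show ?thesis unfolding r0sq by simp
  qed
  have nfk: "cinner fk fk = 1"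
  proof -
    have "cinner fk fk = cnj \<eta>1 * \<eta>1 + complex_of_real (r1\<^sup>2)"
      unfolding fk_def using ce0 ce1 ce01 ce10 by (simp add: power2_eq_square)
    also have "\<dots> = complex_of_real ((cmod \<eta>1)\<^sup>2 + r1\<^sup>2)"
      by (metis complex_norm_square mult.commute of_real_add)
    finally show ?thesis unfolding r1sq by simp
  qed
  have eke0: "cinner ek e0 = cnj \<eta>0" unfolding ek_def using ce0 ce10 by simp
  have e0fk: "cinner e0 fk = \<eta>1" unfolding fk_def using ce0 ce01 by simp
  obtain WF where uWF: "unitary_op WF" and WF1: "mv WF (\<lambda>x. complex_of_real q0 * e0 x) = a0"
      and WF2: "mv WF (\<lambda>x. complex_of_real s1 * fk x) = b0"
  proof -
    have g1: "cinner (\<lambda>x. complex_of_real q0 * e0 x) (\<lambda>x. complex_of_real q0 * e0 x) = cinner a0 a0"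
      using ce0 cinner_self_Re[of a0] q0sq by (simp add: power2_eq_square flip: of_real_mult)
    have g2: "cinner (\<lambda>x. complex_of_real s1 * fk x) (\<lambda>x. complex_of_real s1 * fk x) = cinner b0 b0"
      using nfk cinner_self_Re[of b0] s1sq by (simp add: power2_eq_square flip: of_real_mult)
    have g12: "cinner (\<lambda>x. complex_of_real q0 * e0 x) (\<lambda>x. complex_of_real s1 * fk x) = cinner a0 b0"
      using e0fk key1 by (simp add: mult_ac)
    show ?thesis using pair_map[OF g1 g2 g12] that by blast
  qed
  obtain WT where uWT: "unitary_op WT" and WT1: "mv WT (\<lambda>x. complex_of_real s0 * ek x) = a1"
      and WT2: "mv WT (\<lambda>x. complex_of_real q1 * e0 x) = b1"
  proof -
    have g1: "cinner (\<lambda>x. complex_of_real s0 * ek x) (\<lambda>x. complex_of_real s0 * ek x) = cinner a1 a1"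
      using nek cinner_self_Re[of a1] s0sq by (simp add: power2_eq_square flip: of_real_mult)
    have g2: "cinner (\<lambda>x. complex_of_real q1 * e0 x) (\<lambda>x. complex_of_real q1 * e0 x) = cinner b1 b1"
      using ce0 cinner_self_Re[of b1] q1sq by (simp add: power2_eq_square flip: of_real_mult)
    have g12: "cinner (\<lambda>x. complex_of_real s0 * ek x) (\<lambda>x. complex_of_real q1 * e0 x) = cinner a1 b1"
      using eke0 key0 by (simp add: mult_ac)
    show ?thesis using pair_map[OF g1 g2 g12] that by blast
  qed
  define W where "W = (\<lambda>t. if t then WT else WF)"
  define V where "V = bd W"
  define U where "U = mm UR V"
  have uV: "unitary_op V" unfolding V_def W_def by (rule unitary_bd) (simp add: uWT uWF)
  have uU: "unitary_op U" unfolding U_def by (rule unitary_mm[OF uR uV])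
  have constr: "complex_of_real q0 * \<eta>1 * complex_of_real (sqrt (1 - q1\<^sup>2))
       + complex_of_real q1 * cnj \<eta>0 * complex_of_real (sqrt (1 - q0\<^sup>2)) = 0"
    unfolding s0eq s1eq key1 key0 by (rule hab)
  have RA: "restricted_attack q0 q1 \<eta>0 \<eta>1 U"
    unfolding restricted_attack_def using q0r q1r et0 et1 constr uU by simp
  define F0 where "F0 = (\<lambda>(t, x). complex_of_real q0 * ket False t * e0 x
                        + complex_of_real (sqrt (1 - q0\<^sup>2)) * ket True t * ek x)"
  define F1 where "F1 = (\<lambda>(t, x). complex_of_real (sqrt (1 - q1\<^sup>2)) * ket False t * fk x
                        + complex_of_real q1 * ket True t * e0 x)"
  have hF: "fwd_map e0 e1 v0 v1 q0 q1 \<eta>0 \<eta>1 \<phi> = (\<lambda>p. cinner v0 \<phi> * F0 p + cinner v1 \<phi> * F1 p)" for \<phi>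
    unfolding fwd_map_def Let_def F0_def F1_def ek_def fk_def r0_def r1_def ..
  have h0: "mv V F0 = w0"
  proof (intro ext)
    fix p :: "bool \<times> 'e"
    obtain t x where p: "p = (t, x)" by fastforce
    have fT: "(\<lambda>x'. F0 (True, x')) = (\<lambda>x. complex_of_real s0 * ek x)"
      unfolding F0_def ket_def s0eq by simp
    have fF: "(\<lambda>x'. F0 (False, x')) = (\<lambda>x. complex_of_real q0 * e0 x)"
      unfolding F0_def ket_def by simp
    show "mv V F0 p = w0 p"
    proof (cases t)
      case True thus ?thesis unfolding p V_def mv_bd using fT WT1 by (simp add: W_def a1_def)
    next
      case False thus ?thesis unfolding p V_def mv_bd using fF WF1 by (simp add: W_def a0_def)
    qed
  qed
  have h1: "mv V F1 = w1"
  proof (intro ext)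
    fix p :: "bool \<times> 'e"
    obtain t x where p: "p = (t, x)" by fastforce
    have fT: "(\<lambda>x'. F1 (True, x')) = (\<lambda>x. complex_of_real q1 * e0 x)"
      unfolding F1_def ket_def by simp
    have fF: "(\<lambda>x'. F1 (False, x')) = (\<lambda>x. complex_of_real s1 * fk x)"
      unfolding F1_def ket_def s1eq by simp
    show "mv V F1 p = w1 p"
    proof (cases t)
      case True thus ?thesis unfolding p V_def mv_bd using fT WT2 by (simp add: W_def b1_def)
    next
      case False thus ?thesis unfolding p V_def mv_bd using fF WF2 by (simp add: W_def b0_def)
    qed
  qed
  have main: "eve_apply U (bob_apply bop (attach_B0 (lift_A (fwd_map e0 e1 v0 v1 q0 q1 \<eta>0 \<eta>1) \<psi>)))
       = eve_apply UR (bob_apply bop (attach_B0 (apply_ATE UF (tensor_E \<psi> \<chi>))))" for bop \<psi>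
  proof -
    have c: "apply_ATE V (lift_A (fwd_map e0 e1 v0 v1 q0 q1 \<eta>0 \<eta>1) \<psi>) = apply_ATE UF (tensor_E \<psi> \<chi>)"
      by (rule core[OF hF _ _ onV]) (simp_all add: h0 h1 w0_def w1_def)
    show ?thesis unfolding U_def eve_mm unfolding V_def eve_bob eve_attach
      using c by (simp add: V_def)
  qed
  show ?thesis using RA main by blast
qed

end
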